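(* In the setting described in the context, there exists $I^*\in\mathcal{I}_c$ such that $$\sup_{I\in\mathcal{I}_c}\rho_b\big(u(w-X+I(X)-\pi_I)\big)=\rho_b\big(u(w-X+I^*(X)-\pi_{I^*})\big),$$ where $\pi_I=\pi(I(X))$.
   Context: Let $(\Omega,\mathcal{F},\mathbb{P})$ be a probability space, and let $X \ge 0$ be a random variable with $\mathbb{E}X<\infty$. Set $$\mathcal{I}=\{I:[0,\infty)\to[0,\infty):0\le I(x)\le x \ \forall x\},$$ $$\mathcal{I}_c=\{I\in\mathcal{I}: 0\le I(x)-I(y)\le x-y \ \forall\, 0\le y\le x\}.$$ Let $\mathcal{D}$ be the set of continuous concave $j:[0,1]\to[0,\infty)$ with $j(0)=0$; these need not be monotone. For such $j$, or for $j=b$ below, and a random variable $Y$ essentially bounded below with $S_Y(t)=\mathbb{P}(Y>t)$, set $$\rho_j(Y)=\int_{-\infty}^0 \big(j(S_Y(t))-j(1)\big)\,dt+\int_0^\infty j(S_Y(t))\,dt.$$ The premium is $\pi(Y)=(1+\theta)\mathbb{E}Y+\rho_k(Y)$, where $\theta>-1$ and $k\in\mathcal{D}$ with $k(0)=k(1)=0$. The buyer has wealth $w$ and a strictly increasing concave utility $u\in C^2(\mathbb{R})$. She also has a continuously differentiable, strictly increasing, convex $b:[0,1]\to[0,1]$ with $b(0)=0$ and $b(1)=1$. It is assumed that $\pi(I(X))$ and $\rho_b(u(w-X+I(X)-\pi(I(X))))$ are finite for all $I\in\mathcal{I}$. *)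

theory Defs
  imports "HOL-Probability.Probability"
begin

definition surv :: "'a measure \<Rightarrow> ('a \<Rightarrow> real) \<Rightarrow> real \<Rightarrow> real" where
  "surv M Y t = measure M {\<omega> \<in> space M. Y \<omega> > t}"

definition rho :: "'a measure \<Rightarrow> (real \<Rightarrow> real) \<Rightarrow> ('a \<Rightarrow> real) \<Rightarrow> real" where
  "rho M j Y = (LINT t:{..0}|lborel. j (surv M Y t) - j 1) + (LINT t:{0..}|lborel. j (surv M Y t))"

definition rho_finite :: "'a measure \<Rightarrow> (real \<Rightarrow> real) \<Rightarrow> ('a \<Rightarrow> real) \<Rightarrow> bool" where
  "rho_finite M j Y \<longleftrightarrow>
     set_integrable lborel {..0} (\<lambda>t. j (surv M Y t) - j 1) \<and>
     set_integrable lborel {0..} (\<lambda>t. j (surv M Y t))"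

definition premium :: "'a measure \<Rightarrow> real \<Rightarrow> (real \<Rightarrow> real) \<Rightarrow> ('a \<Rightarrow> real) \<Rightarrow> real" where
  "premium M \<theta> k Y = (1 + \<theta>) * (\<integral>\<omega>. Y \<omega> \<partial>M) + rho M k Y"

definition Ind :: "(real \<Rightarrow> real) set" where
  "Ind = {I. \<forall>x\<ge>0. 0 \<le> I x \<and> I x \<le> x}"

definition Ind_c :: "(real \<Rightarrow> real) set" where
  "Ind_c = {I \<in> Ind. \<forall>x y. 0 \<le> y \<and> y \<le> x \<longrightarrow> 0 \<le> I x - I y \<and> I x - I y \<le> x - y}"

definition Dset :: "(real \<Rightarrow> real) set" where
  "Dset = {j. continuous_on {0..1} j \<and> concave_on {0..1} j \<and>
              (\<forall>x\<in>{0..1}. 0 \<le> j x) \<and> j 0 = 0}"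

definition objective :: "'a measure \<Rightarrow> ('a \<Rightarrow> real) \<Rightarrow> real \<Rightarrow> (real \<Rightarrow> real) \<Rightarrow> real
    \<Rightarrow> (real \<Rightarrow> real) \<Rightarrow> (real \<Rightarrow> real) \<Rightarrow> (real \<Rightarrow> real) \<Rightarrow> real" where
  "objective M X \<theta> k w u b I =
     rho M b (\<lambda>\<omega>. u (w - X \<omega> + I (X \<omega>) - premium M \<theta> k (\<lambda>\<omega>'. I (X \<omega>'))))"

end

theory Submission
  imports Defs
begin


lemma fatou_ennreal:
  fixes G :: "nat \<Rightarrow> 'a \<Rightarrow> real" and g :: "'a \<Rightarrow> real"
  assumes GI: "\<And>n. integrable N (G n)" and G0: "\<And>n x. 0 \<le> G n x"
    and gI: "integrable N g" and g0: "\<And>x. 0 \<le> g x"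
    and lim: "AE x in N. ennreal (g x) \<le> liminf (\<lambda>n. ennreal (G n x))"
  shows "ennreal (integral\<^sup>L N g) \<le> liminf (\<lambda>n. ennreal (integral\<^sup>L N (G n)))"
proof -
  have "ennreal (integral\<^sup>L N g) = (\<integral>\<^sup>+ x. ennreal (g x) \<partial>N)"
    using nn_integral_eq_integral[OF gI] g0 by simp
  also have "\<dots> \<le> (\<integral>\<^sup>+ x. liminf (\<lambda>n. ennreal (G n x)) \<partial>N)"
    by (rule nn_integral_mono_AE[OF lim])
  also have "\<dots> \<le> liminf (\<lambda>n. \<integral>\<^sup>+ x. ennreal (G n x) \<partial>N)"
    by (rule nn_integral_liminf) (use GI in auto)
  also have "(\<lambda>n. \<integral>\<^sup>+ x. ennreal (G n x) \<partial>N) = (\<lambda>n. ennreal (integral\<^sup>L N (G n)))"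
    using nn_integral_eq_integral[OF GI] G0 by simp
  finally show ?thesis .
qed

lemma atoms_null:
  assumes "prob_space M" and Zm: "Z \<in> borel_measurable M"
  shows "AE t in lborel. measure M {\<omega>\<in>space M. Z \<omega> = t} = 0"
proof -
  interpret prob_space M by fact
  let ?D = "distr M borel Z"
  have "finite_measure ?D" by (rule finite_measure_distr) (use Zm in auto)
  then have c: "countable {x. measure ?D {x} \<noteq> 0}" by (rule finite_measure.countable_support)
  have eq: "measure ?D {t} = measure M {\<omega>\<in>space M. Z \<omega> = t}" for t
    using measure_distr[OF Zm, of "{t}"] by (simp add: vimage_def Int_def conj_commute)
  have "{x. measure ?D {x} \<noteq> 0} \<in> null_sets lborel"
    by (rule countable_imp_null_set_lborel[OF c])
  then show ?thesis
    by (rule AE_I') (auto simp: eq)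
qed

lemma surv_eq_int:
  "surv M Z t = integral\<^sup>L M (\<lambda>\<omega>. if Z \<omega> > t then 1 else 0)"
proof -
  have "surv M Z t = integral\<^sup>L M (indicator {\<omega>\<in>space M. Z \<omega> > t})"
    unfolding surv_def by (subst Bochner_Integration.integral_indicator) (simp add: Int_absorb2 subset_eq)
  also have "\<dots> = integral\<^sup>L M (\<lambda>\<omega>. if Z \<omega> > t then 1 else 0)"
    by (rule Bochner_Integration.integral_cong) (auto simp: indicator_def)
  finally show ?thesis .
qed

lemma surv_bounds:
  assumes "prob_space M" shows "0 \<le> surv M Z t" "surv M Z t \<le> 1"
  unfolding surv_def using assms by (auto intro: prob_space.prob_le_1)

lemma surv_lim_upper:
  assumes P: "prob_space M" and Zsm: "\<And>n. Zs n \<in> borel_measurable M" and Zm: "Z \<in> borel_measurable M"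
    and ev: "AE \<omega> in M. \<forall>e>0. eventually (\<lambda>n. Zs n \<omega> < Z \<omega> + e) sequentially"
    and at: "measure M {\<omega>\<in>space M. Z \<omega> = t} = 0"
  shows "\<exists>a. a \<longlonglongrightarrow> surv M Z t \<and> (\<forall>n. surv M (Zs n) t \<le> a n)"
proof -
  interpret prob_space M by fact
  define f where "f n \<omega> = max (if Zs n \<omega> > t then 1 else 0) (if Z \<omega> > t then 1 else (0::real))" for n \<omega>
  have fm: "f n \<in> borel_measurable M" for n unfolding f_def using Zsm[of n] Zm by measurable
  have nz: "AE \<omega> in M. Z \<omega> \<noteq> t"
  proof (rule AE_I'[of "{\<omega>\<in>space M. Z \<omega> = t}"])
    show "{\<omega> \<in> space M. Z \<omega> = t} \<in> null_sets M"
      using at emeasure_eq_measure[of "{\<omega> \<in> space M. Z \<omega> = t}"] Zm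
      by (auto simp: null_sets_def)
  qed auto
  have "AE \<omega> in M. (\<lambda>n. f n \<omega>) \<longlonglongrightarrow> (if Z \<omega> > t then 1 else 0)"
    using nz ev
  proof eventually_elim
    case (elim \<omega>)
    show ?case
    proof (cases "Z \<omega> > t")
      case True then show ?thesis by (simp add: f_def)
    next
      case False
      with elim have lt: "Z \<omega> < t" by auto
      have "t - Z \<omega> > 0" using lt by simp
      from elim(2)[rule_format, OF this] have "eventually (\<lambda>n. Zs n \<omega> < Z \<omega> + (t - Z \<omega>)) sequentially" .
      then have "eventually (\<lambda>n. f n \<omega> = 0) sequentially"
        by eventually_elim (use False in \<open>auto simp: f_def\<close>)
      then show ?thesis using False
        by (simp add: tendsto_eventually)
    qed
  qed
  then have "(\<lambda>n. integral\<^sup>L M (f n)) \<longlonglongrightarrow> integral\<^sup>L M (\<lambda>\<omega>. if Z \<omega> > t then 1 else 0)"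
    by (intro integral_dominated_convergence[where w="\<lambda>_. 1"]) (use fm Zm in \<open>auto simp: f_def\<close>)
  moreover have "surv M (Zs n) t \<le> integral\<^sup>L M (f n)" for n
  proof -
    have i1: "integrable M (f n)"
      by (rule integrable_const_bound[where B=1]) (use fm in \<open>auto simp: f_def\<close>)
    have i2: "integrable M (\<lambda>\<omega>. if Zs n \<omega> > t then 1 else (0::real))"
      by (rule integrable_const_bound[where B=1]) (use Zsm[of n] in \<open>auto\<close>)
    show ?thesis unfolding surv_eq_int using i1 i2
      by (intro integral_mono) (auto simp: f_def)
  qed
  ultimately show ?thesis unfolding surv_eq_int[of M Z] by blast
qed

lemma surv_lim_lower:
  assumes P: "prob_space M" and Zsm: "\<And>n. Zs n \<in> borel_measurable M" and Zm: "Z \<in> borel_measurable M"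
    and ev: "AE \<omega> in M. \<forall>e>0. eventually (\<lambda>n. Zs n \<omega> > Z \<omega> - e) sequentially"
  shows "\<exists>a. a \<longlonglongrightarrow> surv M Z t \<and> (\<forall>n. a n \<le> surv M (Zs n) t)"
proof -
  interpret prob_space M by fact
  define f where "f n \<omega> = min (if Zs n \<omega> > t then 1 else 0) (if Z \<omega> > t then 1 else (0::real))" for n \<omega>
  have fm: "f n \<in> borel_measurable M" for n unfolding f_def using Zsm[of n] Zm by measurable
  have "AE \<omega> in M. (\<lambda>n. f n \<omega>) \<longlonglongrightarrow> (if Z \<omega> > t then 1 else 0)"
    using ev
  proof eventually_elim
    case (elim \<omega>)
    show ?case
    proof (cases "Z \<omega> > t")
      case False then show ?thesis by (simp add: f_def)
    next
      case True
      have "Z \<omega> - t > 0" using True by simp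
      from elim[rule_format, OF this] have "eventually (\<lambda>n. Zs n \<omega> > Z \<omega> - (Z \<omega> - t)) sequentially" .
      then have "eventually (\<lambda>n. f n \<omega> = 1) sequentially"
        by eventually_elim (use True in \<open>auto simp: f_def\<close>)
      then show ?thesis using True
        by (simp add: tendsto_eventually)
    qed
  qed
  then have "(\<lambda>n. integral\<^sup>L M (f n)) \<longlonglongrightarrow> integral\<^sup>L M (\<lambda>\<omega>. if Z \<omega> > t then 1 else 0)"
    by (intro integral_dominated_convergence[where w="\<lambda>_. 1"]) (use fm Zm in \<open>auto simp: f_def\<close>)
  moreover have "integral\<^sup>L M (f n) \<le> surv M (Zs n) t" for n
  proof -
    have i1: "integrable M (f n)"
      by (rule integrable_const_bound[where B=1]) (use fm in \<open>auto simp: f_def\<close>)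
    have i2: "integrable M (\<lambda>\<omega>. if Zs n \<omega> > t then 1 else (0::real))"
      by (rule integrable_const_bound[where B=1]) (use Zsm[of n] in \<open>auto\<close>)
    show ?thesis unfolding surv_eq_int using i1 i2
      by (intro integral_mono) (auto simp: f_def)
  qed
  ultimately show ?thesis unfolding surv_eq_int[of M Z] by blast
qed




definition C0 :: "(real \<Rightarrow> real) set" where
  "C0 = {J \<in> Ind_c. \<forall>x<0. J x = 0}"

lemma C0_lip: assumes "J \<in> C0" shows "\<bar>J x - J y\<bar> \<le> \<bar>x - y\<bar>"
proof -
  have c: "\<forall>x y. 0 \<le> y \<and> y \<le> x \<longrightarrow> 0 \<le> J x - J y \<and> J x - J y \<le> x - y"
    and i: "\<forall>x\<ge>0. 0 \<le> J x \<and> J x \<le> x" and z: "\<forall>x<0. J x = 0"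
    using assms by (auto simp: C0_def Ind_c_def Ind_def)
  show ?thesis
  proof (cases "0 \<le> x"; cases "0 \<le> y")
    assume "0 \<le> x" "0 \<le> y" then show ?thesis using c[rule_format, of x y] c[rule_format, of y x]
      by (cases "y \<le> x") auto
  next
    assume "0 \<le> x" "\<not> 0 \<le> y" then show ?thesis using i z by auto
  next
    assume "\<not> 0 \<le> x" "0 \<le> y" then show ?thesis using i z by auto
  next
    assume "\<not> 0 \<le> x" "\<not> 0 \<le> y" then show ?thesis using z by auto
  qed
qed

lemma C0_cont: assumes "J \<in> C0" shows "continuous_on UNIV J"
proof (rule lipschitz_on_continuous_on[where L=1])
  show "1-lipschitz_on UNIV J" unfolding lipschitz_on_def dist_real_def
    using C0_lip[OF assms] by auto
qed

lemma C0_meas: "J \<in> C0 \<Longrightarrow> J \<in> borel_measurable borel"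
  using C0_cont borel_measurable_continuous_onI by blast

lemma C0_Ind: "J \<in> C0 \<Longrightarrow> J \<in> Ind" and C0_Ind_c: "J \<in> C0 \<Longrightarrow> J \<in> Ind_c"
  by (auto simp: C0_def Ind_c_def)

lemma C0_bounds: "J \<in> C0 \<Longrightarrow> 0 \<le> x \<Longrightarrow> 0 \<le> J x \<and> J x \<le> x"
  by (auto simp: C0_def Ind_c_def Ind_def)

locale setting = prob_space M for M :: "'a measure" +
  fixes X :: "'a \<Rightarrow> real" and \<theta> w :: real and k u b :: "real \<Rightarrow> real"
  assumes Xm: "X \<in> borel_measurable M" and X0: "\<forall>\<omega>\<in>space M. 0 \<le> X \<omega>" and Xint: "integrable M X"
    and th: "\<theta> > -1" and kcont: "continuous_on {0..1} k" and k0: "\<forall>x\<in>{0..1}. 0 \<le> k x"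
    and k1: "k 1 = 0"
    and ucont: "continuous_on UNIV u" and umono: "mono u"
    and bcont: "continuous_on {0..1} b" and bmono: "mono_on {0..1} b" and b0: "b 0 = 0" and b1: "b 1 = 1"
    and fin: "\<forall>I\<in>Ind. I \<in> borel_measurable borel \<longrightarrow>
           rho_finite M k (\<lambda>\<omega>. I (X \<omega>)) \<and>
           rho_finite M b (\<lambda>\<omega>. u (w - X \<omega> + I (X \<omega>) - premium M \<theta> k (\<lambda>\<omega>'. I (X \<omega>'))))"
begin

definition "Y J = (\<lambda>\<omega>. J (X \<omega>))"
definition "Hk J t = indicator {0..} t * k (surv M (Y J) t)"
definition "prem J = premium M \<theta> k (Y J)"
definition "Z J = (\<lambda>\<omega>. u (w - X \<omega> + J (X \<omega>) - prem J))"
definition "Cc = \<bar>u w\<bar>"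
definition "G J t = indicator {..Cc} t * (1 - b (surv M (Z J) t))"

lemma Y_meas: "J \<in> C0 \<Longrightarrow> Y J \<in> borel_measurable M"
  unfolding Y_def using C0_meas Xm by measurable

lemma Y_bounds: "J \<in> C0 \<Longrightarrow> \<omega> \<in> space M \<Longrightarrow> 0 \<le> Y J \<omega> \<and> Y J \<omega> \<le> X \<omega>"
  unfolding Y_def using C0_bounds X0 by auto

lemma surv01: "0 \<le> surv M V t" "surv M V t \<le> 1"
  using surv_bounds prob_space_axioms by auto

lemma surv_Y_neg: assumes "J \<in> C0" "t < 0" shows "surv M (Y J) t = 1"
proof -
  have "{\<omega>\<in>space M. Y J \<omega> > t} = space M" using Y_bounds[OF assms(1)] assms(2) by force
  then show ?thesis unfolding surv_def by (simp add: prob_space)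
qed

lemma b01: "s \<in> {0..1} \<Longrightarrow> 0 \<le> b s \<and> b s \<le> 1"
  using bmono[unfolded mono_on_def, rule_format, of 0 s] bmono[unfolded mono_on_def, rule_format, of s 1] b0 b1
  by auto

lemma k_surv0: "0 \<le> k (surv M V t)"
  using k0 surv01 by auto

lemma Hk_nonneg: "0 \<le> Hk J t"
  unfolding Hk_def using k_surv0 by simp

lemma rhok: assumes J: "J \<in> C0"
  shows "integrable lborel (Hk J)" "rho M k (Y J) = integral\<^sup>L lborel (Hk J)"
proof -
  have rf: "rho_finite M k (Y J)" using fin C0_Ind[OF J] C0_meas[OF J] unfolding Y_def by blast
  then show "integrable lborel (Hk J)"
    unfolding rho_finite_def set_integrable_def Hk_def by simp
  have ae: "AE x in lborel. indicator {..0} x *\<^sub>R (k (surv M (Y J) x) - k 1) = (0::real)"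
    using AE_lborel_singleton[of 0]
  proof eventually_elim
    case (elim x) then show ?case using surv_Y_neg[OF J, of x] by (auto simp: indicator_def k1)
  qed
  have "(LINT t:{..0}|lborel. k (surv M (Y J) t) - k 1) = 0"
    unfolding set_lebesgue_integral_def by (rule integral_eq_zero_AE[OF ae])
  then show "rho M k (Y J) = integral\<^sup>L lborel (Hk J)"
    unfolding rho_def set_lebesgue_integral_def Hk_def by simp
qed

lemma EY_nonneg: "J \<in> C0 \<Longrightarrow> 0 \<le> integral\<^sup>L M (Y J)"
  using Y_bounds by (intro integral_nonneg_AE) auto

lemma prem_nonneg: assumes "J \<in> C0" shows "0 \<le> prem J"
proof -
  have "0 \<le> integral\<^sup>L lborel (Hk J)" using Hk_nonneg by (intro integral_nonneg_AE) auto
  then show ?thesis unfolding prem_def premium_def using rhok[OF assms] EY_nonneg[OF assms] th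
    by simp
qed

lemma Z_meas: "J \<in> C0 \<Longrightarrow> Z J \<in> borel_measurable M"
  unfolding Z_def using C0_meas Xm borel_measurable_continuous_onI[OF ucont] by measurable

lemma Z_le: assumes "J \<in> C0" "\<omega> \<in> space M" shows "Z J \<omega> \<le> u w"
proof -
  have "w - X \<omega> + J (X \<omega>) - prem J \<le> w"
    using Y_bounds[OF assms] prem_nonneg[OF assms(1)] unfolding Y_def by auto
  then show ?thesis unfolding Z_def using umono by (auto simp: mono_def)
qed

lemma surv_Z_big: assumes "J \<in> C0" "Cc < t" shows "surv M (Z J) t = 0"
proof -
  have "{\<omega>\<in>space M. Z J \<omega> > t} = {}" using Z_le[OF assms(1)] assms(2) unfolding Cc_def by force
  then show ?thesis unfolding surv_def by (metis measure_empty)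
qed

lemma surv_meas: assumes "V \<in> borel_measurable M" shows "surv M V \<in> borel_measurable borel"
proof -
  have "mono (\<lambda>t. - surv M V t)"
  proof (rule monoI)
    fix s t :: real assume "s \<le> t"
    then have "{\<omega>\<in>space M. V \<omega> > t} \<subseteq> {\<omega>\<in>space M. V \<omega> > s}" by auto
    moreover have "{\<omega>\<in>space M. V \<omega> > s} \<in> sets M" using assms by measurable
    ultimately show "- surv M V s \<le> - surv M V t" unfolding surv_def
      by (simp add: finite_measure_mono)
  qed
  then have "(\<lambda>t. - surv M V t) \<in> borel_measurable borel" by (rule borel_measurable_mono)
  then have "(\<lambda>t. - (- surv M V t)) \<in> borel_measurable borel" by measurable
  then show ?thesis by simp
qed

lemma b_comp_meas: assumes "f \<in> borel_measurable N" "\<And>x. f x \<in> {0..1}"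
  shows "(\<lambda>x. b (f x)) \<in> borel_measurable N"
proof -
  define c where "c s = max 0 (min 1 s)" for s :: real
  have "continuous_on UNIV (b \<circ> c)"
    by (rule continuous_on_compose) (auto simp: c_def intro!: continuous_intros continuous_on_subset[OF bcont])
  then have "(b \<circ> c) \<in> borel_measurable borel" by (rule borel_measurable_continuous_onI)
  then have "(\<lambda>x. (b \<circ> c) (f x)) \<in> borel_measurable N" using assms(1) by measurable
  moreover have "(b \<circ> c) (f x) = b (f x)" for x using assms(2)[of x] by (auto simp: c_def)
  ultimately show ?thesis by simp
qed

lemma G_meas: "J \<in> C0 \<Longrightarrow> G J \<in> borel_measurable borel"
proof -
  assume J: "J \<in> C0"
  have "(\<lambda>t. b (surv M (Z J) t)) \<in> borel_measurable borel"
    by (rule b_comp_meas) (use surv_meas[OF Z_meas[OF J]] surv01 in auto)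
  then show ?thesis unfolding G_def by measurable
qed

lemma G_nonneg: "0 \<le> G J t"
  unfolding G_def using b01 surv01 by simp

lemma obj_eq: assumes J: "J \<in> C0"
  shows "integrable lborel (G J)" "objective M X \<theta> k w u b J = Cc - integral\<^sup>L lborel (G J)"
proof -
  have rf: "rho_finite M b (Z J)" using fin C0_Ind[OF J] C0_meas[OF J]
    unfolding Z_def prem_def Y_def by blast
  define A where "A t = indicator {..0} t * (b (surv M (Z J) t) - b 1)" for t
  define B where "B t = indicator {0..} t * b (surv M (Z J) t)" for t
  define D where "D t = (indicator {0<..Cc} t :: real)" for t
  have iA: "integrable lborel A" and iB: "integrable lborel B"
    using rf unfolding rho_finite_def set_integrable_def A_def B_def by auto
  have Cc0: "0 \<le> Cc" unfolding Cc_def by simp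
  have iD: "integrable lborel D" unfolding D_def
    by (intro integrable_real_indicator) (use Cc0 in \<open>auto simp: emeasure_lborel_Ioc ennreal_less_top\<close>)
  have intD: "integral\<^sup>L lborel D = Cc" unfolding D_def using Cc0
    by (simp add: Bochner_Integration.integral_indicator measure_lborel_Ioc)
  have ae: "AE t in lborel. G J t = D t - A t - B t"
    using AE_lborel_singleton[of 0]
  proof eventually_elim
    case (elim t)
    show ?case
    proof (cases "t < 0")
      case True then show ?thesis using Cc0 by (simp add: G_def A_def B_def D_def b1)
    next
      case False
      with elim have t: "0 < t" by auto
      show ?thesis
      proof (cases "t \<le> Cc")
        case True then show ?thesis using t by (simp add: G_def A_def B_def D_def)
      next
        case False then show ?thesis using t surv_Z_big[OF J, of t]
          by (simp add: G_def A_def B_def D_def b0)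
      qed
    qed
  qed
  have iR: "integrable lborel (\<lambda>t. D t - A t - B t)" using iA iB iD by auto
  show "integrable lborel (G J)"
    by (rule integrable_cong_AE_imp[OF iR]) (use ae G_meas[OF J] in \<open>auto simp: eq_commute\<close>)
  have "integral\<^sup>L lborel (G J) = integral\<^sup>L lborel (\<lambda>t. D t - A t - B t)"
    by (rule integral_cong_AE) (use ae \<open>integrable lborel (G J)\<close> iR in \<open>auto intro: borel_measurable_integrable\<close>)
  also have "\<dots> = Cc - integral\<^sup>L lborel A - integral\<^sup>L lborel B"
    using iA iB iD intD by simp
  finally have eq1: "integral\<^sup>L lborel (G J) = Cc - integral\<^sup>L lborel A - integral\<^sup>L lborel B" .
  have "integral\<^sup>L lborel A + integral\<^sup>L lborel B = objective M X \<theta> k w u b J"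
    unfolding objective_def rho_def set_lebesgue_integral_def A_def B_def Z_def prem_def Y_def by simp
  with eq1 show "objective M X \<theta> k w u b J = Cc - integral\<^sup>L lborel (G J)" by simp
qed

end



context setting begin

lemma usc:
  assumes Jn: "\<And>n. Js n \<in> C0" and J: "J \<in> C0" and conv: "\<And>x. (\<lambda>n. Js n x) \<longlonglongrightarrow> J x"
  shows "ennreal (integral\<^sup>L lborel (G J)) \<le> liminf (\<lambda>n. ennreal (integral\<^sup>L lborel (G (Js n))))"
proof -
  have convY: "(\<lambda>n. Y (Js n) \<omega>) \<longlonglongrightarrow> Y J \<omega>" for \<omega> unfolding Y_def by (rule conv)
  have EY: "(\<lambda>n. integral\<^sup>L M (Y (Js n))) \<longlonglongrightarrow> integral\<^sup>L M (Y J)"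
  proof (rule integral_dominated_convergence[where w=X])
    show "Y J \<in> borel_measurable M" by (rule Y_meas[OF J])
    show "Y (Js n) \<in> borel_measurable M" for n by (rule Y_meas[OF Jn])
    show "integrable M X" by (rule Xint)
    show "AE x in M. (\<lambda>n. Y (Js n) x) \<longlonglongrightarrow> Y J x" using convY by simp
    show "AE x in M. norm (Y (Js n) x) \<le> X x" for n
      by (rule AE_I2) (use Y_bounds[OF Jn] in auto)
  qed
  have Hkconv: "AE t in lborel. (\<lambda>n. Hk (Js n) t) \<longlonglongrightarrow> Hk J t"
    using atoms_null[OF prob_space_axioms Y_meas[OF J]]
  proof eventually_elim
    case (elim t)
    have up: "AE \<omega> in M. \<forall>e>0. eventually (\<lambda>n. Y (Js n) \<omega> < Y J \<omega> + e) sequentially"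
      by (intro AE_I2 allI impI order_tendstoD(2)[OF convY]) simp
    have lo: "AE \<omega> in M. \<forall>e>0. eventually (\<lambda>n. Y (Js n) \<omega> > Y J \<omega> - e) sequentially"
      by (intro AE_I2 allI impI order_tendstoD(1)[OF convY]) simp
    obtain a where a: "a \<longlonglongrightarrow> surv M (Y J) t" "\<forall>n. surv M (Y (Js n)) t \<le> a n"
      using surv_lim_upper[OF prob_space_axioms Y_meas[OF Jn] Y_meas[OF J] up elim] by blast
    obtain a' where a': "a' \<longlonglongrightarrow> surv M (Y J) t" "\<forall>n. a' n \<le> surv M (Y (Js n)) t"
      using surv_lim_lower[OF prob_space_axioms Y_meas[OF Jn] Y_meas[OF J] lo] by blast
    have "(\<lambda>n. surv M (Y (Js n)) t) \<longlonglongrightarrow> surv M (Y J) t"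
      by (rule tendsto_sandwich[OF _ _ a'(1) a(1)]) (use a a' in auto)
    then have "(\<lambda>n. k (surv M (Y (Js n)) t)) \<longlonglongrightarrow> k (surv M (Y J) t)"
      by (rule continuous_on_tendsto_compose[OF kcont]) (use surv01 in auto)
    then show ?case unfolding Hk_def by (intro tendsto_mult_left)
  qed
  have Rk: "ennreal (integral\<^sup>L lborel (Hk J)) \<le> liminf (\<lambda>n. ennreal (integral\<^sup>L lborel (Hk (Js n))))"
  proof (rule fatou_ennreal)
    show "integrable lborel (Hk (Js n))" for n by (rule rhok(1)[OF Jn])
    show "integrable lborel (Hk J)" by (rule rhok(1)[OF J])
    show "0 \<le> Hk (Js n) x" "0 \<le> Hk J x" for n x by (rule Hk_nonneg)+
    show "AE x in lborel. ennreal (Hk J x) \<le> liminf (\<lambda>n. ennreal (Hk (Js n) x))"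
      using Hkconv
    proof eventually_elim
      case (elim x)
      have "liminf (\<lambda>n. ennreal (Hk (Js n) x)) = ennreal (Hk J x)"
        by (rule lim_imp_Liminf) (auto intro: tendsto_ennrealI elim)
      then show ?case by simp
    qed
  qed
  have premlo: "eventually (\<lambda>n. prem (Js n) > prem J - e) sequentially" if e: "e > 0" for e
  proof -
    let ?R = "\<lambda>J. integral\<^sup>L lborel (Hk J)"
    have pe: "prem J' = (1 + \<theta>) * integral\<^sup>L M (Y J') + ?R J'" if "J' \<in> C0" for J'
      unfolding prem_def premium_def using rhok(2)[OF that] by simp
    have ev1: "eventually (\<lambda>n. ?R (Js n) > ?R J - e/2) sequentially"
    proof (cases "?R J - e/2 < 0")
      case True
      have "0 \<le> ?R (Js n)" for n using Hk_nonneg by (intro integral_nonneg_AE) auto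
      then show ?thesis using True by (intro always_eventually allI) (metis diff_0 less_le_trans add.commute diff_add_cancel diff_less_eq)
    next
      case False
      have "ennreal (?R J - e/2) < ennreal (?R J)"
        using False e by (subst ennreal_less_iff) auto
      also have "\<dots> \<le> liminf (\<lambda>n. ennreal (?R (Js n)))" by (rule Rk)
      finally have "eventually (\<lambda>n. ennreal (?R J - e/2) < ennreal (?R (Js n))) sequentially"
        by (rule less_LiminfD)
      then show ?thesis
        by eventually_elim (use False in \<open>simp add: ennreal_less_iff\<close>)
    qed
    have "(\<lambda>n. (1 + \<theta>) * integral\<^sup>L M (Y (Js n))) \<longlonglongrightarrow> (1 + \<theta>) * integral\<^sup>L M (Y J)"
      by (intro tendsto_mult_left EY)
    then have ev2: "eventually (\<lambda>n. (1 + \<theta>) * integral\<^sup>L M (Y (Js n)) > (1 + \<theta>) * integral\<^sup>L M (Y J) - e/2) sequentially"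
      by (rule order_tendstoD(1)) (use e in simp)
    from ev1 ev2 show ?thesis
      by eventually_elim (simp add: pe[OF Jn] pe[OF J])
  qed
  have Zup: "AE \<omega> in M. \<forall>e>0. eventually (\<lambda>n. Z (Js n) \<omega> < Z J \<omega> + e) sequentially"
  proof (rule AE_I2, intro allI impI)
    fix \<omega> and e :: real
    let ?x = "X \<omega>"
    define a where "a = w - ?x + J ?x - prem J"
    assume "\<omega> \<in> space M" "0 < e"
    have "isCont u a" using ucont by (simp add: continuous_on_eq_continuous_at)
    then have "u \<midarrow>a\<rightarrow> u a" by (simp add: isCont_def)
    from LIM_D[OF this \<open>0 < e\<close>] obtain s where s: "s > 0"
      "\<forall>y. y \<noteq> a \<and> norm (y - a) < s \<longrightarrow> norm (u y - u a) < e" by blast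
    have us: "u (a + s/2) < u a + e" using s(2)[rule_format, of "a + s/2"] s(1) by auto
    have ev1: "eventually (\<lambda>n. Js n ?x < J ?x + s/4) sequentially"
      by (rule order_tendstoD(2)[OF conv]) (use s in simp)
    have ev2: "eventually (\<lambda>n. prem (Js n) > prem J - s/4) sequentially"
      by (rule premlo) (use s in simp)
    from ev1 ev2 show "eventually (\<lambda>n. Z (Js n) \<omega> < Z J \<omega> + e) sequentially"
    proof eventually_elim
      case (elim n)
      have "w - ?x + Js n ?x - prem (Js n) \<le> a + s/2" using elim unfolding a_def by simp
      then have "u (w - ?x + Js n ?x - prem (Js n)) \<le> u (a + s/2)" using umono by (auto simp: mono_def)
      then show ?case using us unfolding Z_def a_def by simp
    qed
  qed
  have Gpt: "AE t in lborel. ennreal (G J t) \<le> liminf (\<lambda>n. ennreal (G (Js n) t))"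
    using atoms_null[OF prob_space_axioms Z_meas[OF J]]
  proof eventually_elim
    case (elim t)
    obtain a where a: "a \<longlonglongrightarrow> surv M (Z J) t" "\<forall>n. surv M (Z (Js n)) t \<le> a n"
      using surv_lim_upper[OF prob_space_axioms Z_meas[OF Jn] Z_meas[OF J] Zup elim] by blast
    define c where "c n = max 0 (min 1 (a n))" for n
    have c01: "c n \<in> {0..1}" for n unfolding c_def by auto
    have "c \<longlonglongrightarrow> max 0 (min 1 (surv M (Z J) t))" unfolding c_def
      by (intro tendsto_max tendsto_min tendsto_const a(1))
    also have "max 0 (min 1 (surv M (Z J) t)) = surv M (Z J) t" using surv01 by simp
    finally have cl: "c \<longlonglongrightarrow> surv M (Z J) t" .
    have "(\<lambda>n. b (c n)) \<longlonglongrightarrow> b (surv M (Z J) t)"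
      by (rule continuous_on_tendsto_compose[OF bcont cl]) (use surv01 c01 in auto)
    then have L: "(\<lambda>n. indicator {..Cc} t * (1 - b (c n))) \<longlonglongrightarrow> G J t"
      unfolding G_def by (intro tendsto_intros)
    have le: "indicator {..Cc} t * (1 - b (c n)) \<le> G (Js n) t" for n
    proof -
      have "surv M (Z (Js n)) t \<le> c n" using a(2)[rule_format, of n] surv01[of "Z (Js n)" t] unfolding c_def by linarith
      then have "b (surv M (Z (Js n)) t) \<le> b (c n)"
        using bmono c01 surv01 by (auto simp: mono_on_def)
      then show ?thesis unfolding G_def by (auto simp: indicator_def)
    qed
    have "ennreal (G J t) = liminf (\<lambda>n. ennreal (indicator {..Cc} t * (1 - b (c n))))"
      by (rule lim_imp_Liminf[symmetric]) (auto intro: tendsto_ennrealI L)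
    also have "\<dots> \<le> liminf (\<lambda>n. ennreal (G (Js n) t))"
      by (intro Liminf_mono always_eventually allI ennreal_leI le)
    finally show ?case .
  qed
  show ?thesis
    by (rule fatou_ennreal[OF obj_eq(1)[OF Jn] G_nonneg obj_eq(1)[OF J] G_nonneg Gpt])
qed

end



lemma C0_abs: assumes "J \<in> C0" shows "\<bar>J x\<bar> \<le> \<bar>x\<bar>"
proof -
  have "J 0 = 0" using C0_bounds[OF assms, of 0] by simp
  then show ?thesis using C0_lip[OF assms, of x 0] by simp
qed

lemma compact_C0:
  fixes K :: "nat \<Rightarrow> real \<Rightarrow> real"
  assumes K: "\<And>n. K n \<in> C0"
  shows "\<exists>r I. strict_mono r \<and> I \<in> C0 \<and> (\<forall>x. (\<lambda>i. K (r i) x) \<longlonglongrightarrow> I x)"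
proof -
  define q where "q = from_nat_into (\<rat> :: real set)"
  have rq: "range q = \<rat>" unfolding q_def
    by (rule range_from_nat_into) (auto intro: countable_rat)
  define P where "P m s = convergent (\<lambda>i. K (s i) (q m))" for m and s :: "nat \<Rightarrow> nat"
  interpret S: subseqs P
  proof
    fix m and s :: "nat \<Rightarrow> nat" assume "strict_mono s"
    have "bounded (range (\<lambda>i. K (s i) (q m)))"
      by (rule boundedI[where B="\<bar>q m\<bar>"]) (use C0_abs[OF K] in auto)
    then obtain l r' where r': "strict_mono r'" "((\<lambda>i. K (s i) (q m)) \<circ> r') \<longlonglongrightarrow> l"
      using bounded_imp_convergent_subsequence by blast
    then have "P m (s \<circ> r')" unfolding P_def convergent_def by (auto simp: o_def)
    with r' show "\<exists>r'. strict_mono r' \<and> P m (s \<circ> r')" by blast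
  qed
  let ?r = "S.diagseq"
  have conv_q: "convergent (\<lambda>i. K (?r i) (q m))" for m
  proof -
    have "P m (?r \<circ> (+) (Suc m))"
    proof (rule S.diagseq_holds)
      fix r s n assume "strict_mono (r :: nat \<Rightarrow> nat)" "P n s"
      then show "P n (s \<circ> r)" unfolding P_def
        using convergent_subseq_convergent by (auto simp: o_def)
    qed
    then obtain l where "(\<lambda>i. K (?r (i + Suc m)) (q m)) \<longlonglongrightarrow> l"
      unfolding P_def convergent_def by (auto simp: o_def add.commute)
    then have "(\<lambda>i. K (?r i) (q m)) \<longlonglongrightarrow> l" by (rule LIMSEQ_offset)
    then show ?thesis unfolding convergent_def by blast
  qed
  have conv_all: "convergent (\<lambda>i. K (?r i) x)" for x
  proof -
    have "Cauchy (\<lambda>i. K (?r i) x)"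
    proof (rule metric_CauchyI)
      fix e :: real assume e: "0 < e"
      obtain q' where q': "q' \<in> \<rat>" "x < q'" "q' < x + e/3"
        using Rats_dense_in_real[of x "x + e/3"] e by auto
      then obtain j where j: "q j = q'" using rq by (metis rangeE)
      have "Cauchy (\<lambda>i. K (?r i) (q j))" using conv_q Cauchy_convergent_iff by blast
      from metric_CauchyD[OF this, of "e/3"] e obtain N where
        N: "\<forall>m\<ge>N. \<forall>n\<ge>N. dist (K (?r m) (q j)) (K (?r n) (q j)) < e/3" by auto
      show "\<exists>N. \<forall>m\<ge>N. \<forall>n\<ge>N. dist (K (?r m) x) (K (?r n) x) < e"
      proof (intro exI allI impI)
        fix m n assume mn: "N \<le> m" "N \<le> n"
        have a: "\<bar>K (?r m) x - K (?r m) q'\<bar> \<le> \<bar>x - q'\<bar>" by (rule C0_lip[OF K])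
        have b: "\<bar>K (?r n) x - K (?r n) q'\<bar> \<le> \<bar>x - q'\<bar>" by (rule C0_lip[OF K])
        have c: "\<bar>K (?r m) q' - K (?r n) q'\<bar> < e/3" using N mn j by (auto simp: dist_real_def)
        have "\<bar>x - q'\<bar> < e/3" using q' by auto
        then show "dist (K (?r m) x) (K (?r n) x) < e" using a b c unfolding dist_real_def by linarith
      qed
    qed
    then show ?thesis by (simp add: Cauchy_convergent_iff)
  qed
  define I where "I x = lim (\<lambda>i. K (?r i) x)" for x
  have lim: "(\<lambda>i. K (?r i) x) \<longlonglongrightarrow> I x" for x
    unfolding I_def using conv_all convergent_LIMSEQ_iff by blast
  have "I \<in> C0"
  proof -
    have "0 \<le> I x \<and> I x \<le> x" if "0 \<le> x" for x
      using tendsto_lowerbound[OF lim, of 0 x] tendsto_upperbound[OF lim, of x x]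
        C0_bounds[OF K that] by auto
    moreover have "0 \<le> I x - I y \<and> I x - I y \<le> x - y" if "0 \<le> y" "y \<le> x" for x y
    proof -
      have l: "(\<lambda>i. K (?r i) x - K (?r i) y) \<longlonglongrightarrow> I x - I y" by (intro tendsto_diff lim)
      have "\<forall>i. 0 \<le> K (?r i) x - K (?r i) y \<and> K (?r i) x - K (?r i) y \<le> x - y"
        using K that unfolding C0_def Ind_c_def by blast
      then show ?thesis using tendsto_lowerbound[OF l, of 0] tendsto_upperbound[OF l, of "x - y"] by auto
    qed
    moreover have "I x = 0" if "x < 0" for x
    proof -
      have "(\<lambda>i. K (?r i) x) = (\<lambda>i. 0)" using K that unfolding C0_def by auto
      then have "(\<lambda>i. K (?r i) x) \<longlonglongrightarrow> 0" by simp
      from LIMSEQ_unique[OF lim[of x] this] show ?thesis .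
    qed
    ultimately show ?thesis unfolding C0_def Ind_c_def Ind_def by auto
  qed
  then show ?thesis using S.subseq_diagseq lim by blast
qed



definition cutf :: "(real \<Rightarrow> real) \<Rightarrow> real \<Rightarrow> real" where
  "cutf J x = (if 0 \<le> x then J x else 0)"

lemma cutf_C0: "J \<in> Ind_c \<Longrightarrow> cutf J \<in> C0"
  unfolding C0_def Ind_c_def Ind_def cutf_def by auto

lemma surv_cong: "(\<And>\<omega>. \<omega> \<in> space M \<Longrightarrow> V \<omega> = V' \<omega>) \<Longrightarrow> surv M V t = surv M V' t"
  unfolding surv_def by (metis (mono_tags, lifting) Collect_cong)

lemma rho_cong: "(\<And>\<omega>. \<omega> \<in> space M \<Longrightarrow> V \<omega> = V' \<omega>) \<Longrightarrow> rho M j V = rho M j V'"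
  unfolding rho_def using surv_cong[of M V V'] by simp

lemma premium_cong: "(\<And>\<omega>. \<omega> \<in> space M \<Longrightarrow> V \<omega> = V' \<omega>) \<Longrightarrow> premium M \<theta> k V = premium M \<theta> k V'"
  unfolding premium_def using rho_cong[of M V V' k] Bochner_Integration.integral_cong[of M M V V'] by simp

lemma obj_cutf: assumes "\<forall>\<omega>\<in>space M. 0 \<le> X \<omega>"
  shows "objective M X \<theta> k w u b (cutf J) = objective M X \<theta> k w u b J"
proof -
  have e: "cutf J (X \<omega>) = J (X \<omega>)" if "\<omega> \<in> space M" for \<omega> using assms that by (simp add: cutf_def)
  have p: "premium M \<theta> k (\<lambda>\<omega>. cutf J (X \<omega>)) = premium M \<theta> k (\<lambda>\<omega>. J (X \<omega>))"
    by (rule premium_cong) (simp add: e)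
  show ?thesis unfolding objective_def p by (rule rho_cong) (simp add: e)
qed



theorem proposition2p2:
  fixes M :: "'a measure" and X :: "'a \<Rightarrow> real" and \<theta> w :: real
    and k u b :: "real \<Rightarrow> real"
  assumes "prob_space M"
    and "X \<in> borel_measurable M" and "\<forall>\<omega>\<in>space M. 0 \<le> X \<omega>" and "integrable M X"
    and "\<theta> > -1"
    and "k \<in> Dset" and "k 1 = 0"
    and "\<exists>u' u''. (\<forall>x. (u has_real_derivative u' x) (at x)) \<and>
                   (\<forall>x. (u' has_real_derivative u'' x) (at x)) \<and> continuous_on UNIV u''"
    and "strict_mono u" and "concave_on UNIV u"
    and "\<exists>b'. continuous_on {0..1} b' \<and>
              (\<forall>x\<in>{0..1}. (b has_real_derivative b' x) (at x within {0..1}))"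
    and "strict_mono_on {0..1} b" and "convex_on {0..1} b" and "b 0 = 0" and "b 1 = 1"
    and "\<forall>I\<in>Ind. I \<in> borel_measurable borel \<longrightarrow>
           rho_finite M k (\<lambda>\<omega>. I (X \<omega>)) \<and>
           rho_finite M b (\<lambda>\<omega>. u (w - X \<omega> + I (X \<omega>) - premium M \<theta> k (\<lambda>\<omega>'. I (X \<omega>'))))"
  shows "\<exists>Istar\<in>Ind_c. (SUP I\<in>Ind_c. ereal (objective M X \<theta> k w u b I))
                        = ereal (objective M X \<theta> k w u b Istar)"
proof -
  have ucont: "continuous_on UNIV u"
  proof -
    obtain u' where "\<forall>x. (u has_real_derivative u' x) (at x)" using assms(8) by blast
    then show ?thesis by (intro continuous_at_imp_continuous_on) (auto intro: DERIV_isCont)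
  qed
  have bcont: "continuous_on {0..1} b"
  proof -
    obtain b' where "\<forall>x\<in>{0..1}. (b has_real_derivative b' x) (at x within {0..1})" using assms(11) by blast
    then show ?thesis unfolding continuous_on_eq_continuous_within by (auto intro: DERIV_continuous)
  qed
  have kc: "continuous_on {0..1} k" and kp: "\<forall>x\<in>{0..1}. 0 \<le> k x"
    using assms(6) unfolding Dset_def by auto
  have um: "mono u" using assms(9) by (rule strict_mono_mono)
  have bm: "mono_on {0..1} b" using assms(12) by (rule strict_mono_on_imp_mono_on)
  have st: "setting M X \<theta> w k u b"
    unfolding setting_def setting_axioms_def
    apply (intro conjI)
                  apply (fact assms(1))
                 apply (fact assms(2))
                apply (fact assms(3))
               apply (fact assms(4))
              apply (fact assms(5))
             apply (fact kc)
            apply (fact kp)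
           apply (fact assms(7))
          apply (fact ucont)
         apply (fact um)
        apply (fact bcont)
       apply (fact bm)
      apply (fact assms(14))
     apply (fact assms(15))
    apply (fact assms(16))
    done
  interpret setting M X \<theta> w k u b by (fact st)
  let ?obj = "objective M X \<theta> k w u b"
  define S where "S = (SUP I\<in>Ind_c. ereal (?obj I))"
  have "(\<lambda>x. 0::real) \<in> Ind_c" unfolding Ind_c_def Ind_def by auto
  then have ne: "(\<lambda>I. ereal (?obj I)) ` Ind_c \<noteq> {}" by blast
  obtain f where f: "incseq f" "range f \<subseteq> (\<lambda>I. ereal (?obj I)) ` Ind_c"
    "Sup ((\<lambda>I. ereal (?obj I)) ` Ind_c) = Sup (range f)"
    using Sup_countable_SUP[OF ne] by blast
  have flim: "f \<longlonglongrightarrow> S" unfolding S_def f(3) by (rule LIMSEQ_SUP[OF f(1)])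
  have "\<forall>n. \<exists>J\<in>Ind_c. f n = ereal (?obj J)" using f(2) by blast
  then obtain J where J: "\<And>n. J n \<in> Ind_c" "\<And>n. f n = ereal (?obj (J n))" by metis
  define K where "K n = cutf (J n)" for n
  have K: "K n \<in> C0" for n unfolding K_def by (rule cutf_C0[OF J(1)])
  have fK: "f n = ereal (?obj (K n))" for n unfolding K_def J(2) obj_cutf[OF assms(3)] ..
  obtain r I where r: "strict_mono r" "I \<in> C0" "\<forall>x. (\<lambda>i. K (r i) x) \<longlonglongrightarrow> I x"
    using compact_C0[of K, OF K] by blast
  have U: "ennreal (integral\<^sup>L lborel (G I)) \<le> liminf (\<lambda>n. ennreal (integral\<^sup>L lborel (G (K (r n)))))"
    by (rule usc[OF K r(2)]) (use r(3) in auto)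
  have "S \<le> ereal (?obj I)"
  proof (rule ccontr)
    assume "\<not> S \<le> ereal (?obj I)"
    then have "ereal (?obj I) < S" by simp
    from ereal_dense2[OF this] obtain c where c: "ereal (?obj I) < ereal c" "ereal c < S" by blast
    have "(f \<circ> r) \<longlonglongrightarrow> S" by (rule LIMSEQ_subseq_LIMSEQ[OF flim r(1)])
    from order_tendstoD(1)[OF this c(2)]
    have ev: "eventually (\<lambda>n. integral\<^sup>L lborel (G (K (r n))) < Cc - c) sequentially"
      by eventually_elim (simp add: fK obj_eq(2)[OF K])
    then obtain N where N: "integral\<^sup>L lborel (G (K (r N))) < Cc - c"
      by (auto simp: eventually_sequentially)
    have "0 \<le> integral\<^sup>L lborel (G (K (r N)))" using G_nonneg by (intro integral_nonneg_AE) auto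
    with N have pos: "0 \<le> Cc - c" by simp
    have "liminf (\<lambda>n. ennreal (integral\<^sup>L lborel (G (K (r n))))) \<le> liminf (\<lambda>n. ennreal (Cc - c))"
      by (rule Liminf_mono) (use ev in \<open>eventually_elim, auto intro: ennreal_leI\<close>)
    also have "liminf (\<lambda>n. ennreal (Cc - c)) = ennreal (Cc - c)" by (rule Liminf_const) simp
    finally have "ennreal (integral\<^sup>L lborel (G I)) \<le> ennreal (Cc - c)" using U by (rule order_trans[rotated])
    then have "integral\<^sup>L lborel (G I) \<le> Cc - c" using pos by (simp add: ennreal_le_iff)
    then have "c \<le> ?obj I" using obj_eq(2)[OF r(2)] by simp
    with c(1) show False by simp
  qed
  moreover have "ereal (?obj I) \<le> S" unfolding S_def
    by (rule SUP_upper) (rule C0_Ind_c[OF r(2)])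
  ultimately show ?thesis using C0_Ind_c[OF r(2)] unfolding S_def by (intro bexI[of _ I]) auto
qed


end
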